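(* Let $\Phi$ be a convex growth function. Then for any $z=x+iy\in \mathbb{C}_+$, the function $$f_z(w):=\Phi^{-1}\left(\frac 1y\right)\frac{y^2}{(w-\bar{z})^2},\quad w\in\mathbb{C}_+,$$ is in $H^\Phi(\mathbb{C}_+)$. Moreover, $\sup_{v>0}\int_{\mathbb{R}}\Phi(|f_z(u+iv)|)du\le \pi$.
   Context: $\mathbb{C}_+=\{x+iy: y>0\}$. A growth function is a continuous nondecreasing function from $[0,\infty)$ onto $[0,\infty)$; $\Phi^{-1}$ is its inverse. $H^\Phi(\mathbb{C}_+)$ is the space of holomorphic $f$ on $\mathbb{C}_+$ with $\sup_{y>0}\inf\{\lambda>0:\int_{\mathbb{R}}\Phi(|f(x+iy)|/\lambda)dx\le1\}<\infty$. *)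

theory Defs
  imports "HOL-Analysis.Analysis"
begin

definition upper_half_plane :: "complex set" where
  "upper_half_plane = {w. Im w > 0}"

definition growth_function :: "(real \<Rightarrow> real) \<Rightarrow> bool" where
  "growth_function \<Phi> \<longleftrightarrow> continuous_on {0..} \<Phi> \<and> mono_on {0..} \<Phi> \<and> \<Phi> ` {0..} = {0..}"

text \<open>Inverse of a growth function (uniquely determined at every t > 0 for convex growth functions).\<close>
definition growth_inv :: "(real \<Rightarrow> real) \<Rightarrow> real \<Rightarrow> real" where
  "growth_inv \<Phi> t = (THE s. s \<ge> 0 \<and> \<Phi> s = t)"

text \<open>Luxemburg quasi-norm of the horizontal slice x \<mapsto> f(x+iy); Inf of empty set is infinity.\<close>
definition slice_lux :: "(real \<Rightarrow> real) \<Rightarrow> (complex \<Rightarrow> complex) \<Rightarrow> real \<Rightarrow> ennreal" where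
  "slice_lux \<Phi> f y = Inf {ennreal c | c. c > 0 \<and>
      (\<integral>\<^sup>+ x. ennreal (\<Phi> (cmod (f (Complex x y)) / c)) \<partial>lborel) \<le> 1}"

definition hardy_orlicz :: "(real \<Rightarrow> real) \<Rightarrow> (complex \<Rightarrow> complex) set" where
  "hardy_orlicz \<Phi> = {f. f holomorphic_on upper_half_plane \<and>
      (SUP y\<in>{0<..}. slice_lux \<Phi> f y) < \<infinity>}"

end

theory Submission
  imports Defs
begin

lemma lorentz0: "(\<integral>\<^sup>+ t. ennreal (1/(1+t^2)) \<partial>lborel) \<le> ennreal pi"
proof -
  let ?g = "\<lambda>t::real. ennreal (1/(1+t^2))"
  have half: "(\<integral>\<^sup>+ t. ennreal (1/(1+t^2)) * indicator {0..} t \<partial>lborel) = ennreal (pi/2 - arctan 0)"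
    by (rule nn_integral_FTC_atLeast[where F=arctan])
       (auto intro!: derivative_eq_intros simp: tendsto_arctan_at_top field_simps add_nonneg_eq_0_iff power2_eq_square)
  have split: "(\<integral>\<^sup>+ t. ?g t \<partial>lborel) = (\<integral>\<^sup>+ t. ?g t * indicator {0..} t \<partial>lborel) + (\<integral>\<^sup>+ t. ?g t * indicator {..<0} t \<partial>lborel)"
    by (subst nn_integral_add[symmetric]) (auto intro!: nn_integral_cong split: split_indicator)
  have "(\<integral>\<^sup>+ t. ?g t * indicator {..<0} t \<partial>lborel) = ennreal \<bar>-1::real\<bar> * (\<integral>\<^sup>+ t. ?g (0 + -1 * t) * indicator {..<0} (0 + -1 * t) \<partial>lborel)"
    by (rule nn_integral_real_affine) measurable
  also have "\<dots> \<le> (\<integral>\<^sup>+ t. ?g t * indicator {0..} t \<partial>lborel)"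
    by (auto intro!: nn_integral_mono split: split_indicator)
  also have "\<dots> = ennreal (pi/2)" using half by simp
  finally have neg: "(\<integral>\<^sup>+ t. ?g t * indicator {..<0} t \<partial>lborel) \<le> ennreal (pi/2)" .
  have h2: "(\<integral>\<^sup>+ t. ?g t * indicator {0..} t \<partial>lborel) = ennreal (pi/2)" using half by simp
  have "(\<integral>\<^sup>+ t. ?g t \<partial>lborel) \<le> ennreal (pi/2) + ennreal (pi/2)"
    unfolding split h2 using neg by (rule add_left_mono)
  also have "\<dots> = ennreal pi" by (simp add: ennreal_plus[symmetric] del: ennreal_plus)
  finally show ?thesis .
qed

lemma lorentz:
  fixes x s :: real assumes "s > 0"
  shows "(\<integral>\<^sup>+ u. ennreal (1/((u-x)^2+s^2)) \<partial>lborel) \<le> ennreal (pi/s)"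
proof -
  have "(\<integral>\<^sup>+ u. ennreal (1/((u-x)^2+s^2)) \<partial>lborel) = \<bar>s\<bar> * (\<integral>\<^sup>+ t. ennreal (1/((x + s*t-x)^2+s^2)) \<partial>lborel)"
    by (rule nn_integral_real_affine) (use assms in auto)
  also have "\<dots> = ennreal s * (\<integral>\<^sup>+ t. ennreal (1/s^2) * ennreal (1/(1+t^2)) \<partial>lborel)"
    using assms by (auto intro!: nn_integral_cong simp: ennreal_mult[symmetric] power2_eq_square field_simps)
  also have "\<dots> = ennreal s * ennreal (1/s^2) * (\<integral>\<^sup>+ t. ennreal (1/(1+t^2)) \<partial>lborel)"
    by (simp add: nn_integral_cmult mult.assoc)
  also have "\<dots> \<le> ennreal s * ennreal (1/s^2) * ennreal pi"
    by (rule mult_left_mono[OF lorentz0]) simp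
  also have "\<dots> = ennreal (pi/s)"
    using assms by (simp add: ennreal_mult[symmetric] power2_eq_square field_simps)
  finally show ?thesis .
qed

lemma phi0: assumes "growth_function \<Phi>" shows "\<Phi> 0 = 0"
proof -
  from assms have m: "mono_on {0..} \<Phi>" and im: "\<Phi> ` {0..} = {0..}" unfolding growth_function_def by auto
  have "0 \<in> \<Phi> ` {0..}" using im by auto
  then obtain t where t: "t \<ge> 0" "\<Phi> t = 0" by auto
  have "\<Phi> 0 \<le> \<Phi> t" using mono_onD[OF m, of 0 t] t by auto
  moreover have "\<Phi> 0 \<ge> 0" using im by auto
  ultimately show ?thesis using t by auto
qed

lemma convK:
  assumes "convex_on {0..} \<Phi>" "\<Phi> 0 = 0" "0 \<le> l" "l \<le> 1" "0 \<le> t"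
  shows "\<Phi> (l*t) \<le> l * \<Phi> t"
proof (cases "l = 0 \<or> l = 1")
  case True then show ?thesis using assms by auto
next
  case False
  then have "\<Phi> ((1-l) *\<^sub>R 0 + l *\<^sub>R t) \<le> (1-l) * \<Phi> 0 + l * \<Phi> t"
    using assms by (intro convex_onD) auto
  then show ?thesis using assms by simp
qed

lemma ginv:
  assumes "growth_function \<Phi>" "convex_on {0..} \<Phi>" "t > 0"
  shows "growth_inv \<Phi> t \<ge> 0 \<and> \<Phi> (growth_inv \<Phi> t) = t"
proof -
  have p0: "\<Phi> 0 = 0" by (rule phi0[OF assms(1)])
  have "t \<in> \<Phi> ` {0..}" using assms(1,3) unfolding growth_function_def by auto
  then obtain s where s: "s \<ge> 0" "\<Phi> s = t" by auto
  have gen: "False" if a: "0 \<le> a" "a < b" "\<Phi> a = t" "\<Phi> b = t" for a b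
  proof -
    have b0: "b > 0" using a by linarith
    have q0: "0 \<le> a/b" using a b0 by simp
    have q1: "a/b < 1" using a b0 by simp
    have "\<Phi> ((a/b) * b) \<le> (a/b) * \<Phi> b"
      by (rule convK[OF assms(2) p0 q0]) (use q1 b0 in auto)
    moreover have "(a/b) * b = a" using b0 by simp
    moreover have "(a/b) * t < 1 * t" using q1 assms(3) by (intro mult_strict_right_mono)
    ultimately show False using a by simp
  qed
  have uniq: "r = s" if r: "r \<ge> 0" "\<Phi> r = t" for r
  proof (rule ccontr)
    assume ne: "r \<noteq> s"
    show False
    proof (cases "r < s")
      case True then show ?thesis using gen[of r s] r s by blast
    next
      case False then have "s < r" using ne by linarith
      then show ?thesis using gen[of s r] r s by blast
    qed
  qed
  have "growth_inv \<Phi> t = s"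
    unfolding growth_inv_def
  proof (rule the_equality)
    show "s \<ge> 0 \<and> \<Phi> s = t" using s by blast
    fix r assume "r \<ge> 0 \<and> \<Phi> r = t"
    then show "r = s" using uniq by blast
  qed
  then show ?thesis using s by simp
qed

lemma modf:
  fixes z :: complex and a u v :: real
  assumes "v > 0" "Im z > 0" "a \<ge> 0"
  shows "cmod (complex_of_real a * (Im z)\<^sup>2 / (Complex u v - cnj z)\<^sup>2)
         = a * (Im z)^2 / ((u - Re z)^2 + (v + Im z)^2)"
proof -
  have e: "Complex u v - cnj z = Complex (u - Re z) (v + Im z)" by (simp add: complex_eq_iff)
  have "cmod ((Complex u v - cnj z)\<^sup>2) = (u - Re z)^2 + (v + Im z)^2"
    unfolding e norm_power by (simp add: cmod_def)
  then show ?thesis using assms by (simp add: norm_divide norm_mult norm_power)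
qed

lemma ptw:
  fixes z :: complex and u v c :: real
  assumes g: "growth_function \<Phi>" "convex_on {0..} \<Phi>" and "v > 0" "Im z > 0" "c \<ge> 1"
  shows "\<Phi> (cmod (complex_of_real (growth_inv \<Phi> (1 / Im z)) * (Im z)\<^sup>2 / (Complex u v - cnj z)\<^sup>2) / c)
     \<le> Im z / c * (1 / ((u - Re z)^2 + (v + Im z)^2))"
proof -
  let ?a = "growth_inv \<Phi> (1 / Im z)" let ?y = "Im z"
  define D where "D = (u - Re z)^2 + (v + Im z)^2"
  have a: "?a \<ge> 0" "\<Phi> ?a = 1 / ?y" using ginv[OF g, of "1/Im z"] assms by auto
  have D1: "D \<ge> (v + ?y)^2" unfolding D_def by simp
  have D2: "(v + ?y)^2 > ?y^2" using assms by (intro power_strict_mono) auto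
  have "?y^2 \<ge> 0" by simp
  then have Dp: "D > 0" using D1 D2 by linarith
  define l where "l = ?y^2 / (c * D)"
  have l0: "0 \<le> l" unfolding l_def using Dp assms by auto
  have l1: "l \<le> 1"
  proof -
    have "1 * D \<le> c * D" using Dp assms by (intro mult_right_mono) auto
    then have "?y^2 \<le> c * D" using D1 D2 by linarith
    moreover have "c * D > 0" using Dp assms by simp
    ultimately show ?thesis unfolding l_def by (simp add: divide_le_eq_1)
  qed
  have m: "cmod (complex_of_real ?a * ?y\<^sup>2 / (Complex u v - cnj z)\<^sup>2) = ?a * ?y^2 / D"
    using modf[of v z ?a u] assms a unfolding D_def by simp
  have "cmod (complex_of_real ?a * ?y\<^sup>2 / (Complex u v - cnj z)\<^sup>2) / c = l * ?a"
    unfolding m l_def using Dp assms by (simp add: field_simps)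
  then have "\<Phi> (cmod (complex_of_real ?a * ?y\<^sup>2 / (Complex u v - cnj z)\<^sup>2) / c) \<le> l * \<Phi> ?a"
    using convK[OF g(2) phi0[OF g(1)] l0 l1 a(1)] by simp
  also have "\<dots> = ?y / c * (1 / D)" unfolding l_def a(2) using assms Dp by (simp add: field_simps power2_eq_square)
  finally show ?thesis unfolding D_def .
qed

lemma intbound:
  fixes z :: complex and v c :: real
  assumes g: "growth_function \<Phi>" "convex_on {0..} \<Phi>" and "v > 0" "Im z > 0" "c \<ge> 1"
  shows "(\<integral>\<^sup>+ u. ennreal (\<Phi> (cmod (complex_of_real (growth_inv \<Phi> (1 / Im z)) * (Im z)\<^sup>2 / (Complex u v - cnj z)\<^sup>2) / c)) \<partial>lborel)
     \<le> ennreal (pi / c)"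
proof -
  have "(\<integral>\<^sup>+ u. ennreal (\<Phi> (cmod (complex_of_real (growth_inv \<Phi> (1 / Im z)) * (Im z)\<^sup>2 / (Complex u v - cnj z)\<^sup>2) / c)) \<partial>lborel)
     \<le> (\<integral>\<^sup>+ u. ennreal (Im z / c) * ennreal (1 / ((u - Re z)^2 + (v + Im z)^2)) \<partial>lborel)"
  proof (intro nn_integral_mono)
    fix u
    have "ennreal (\<Phi> (cmod (complex_of_real (growth_inv \<Phi> (1 / Im z)) * (Im z)\<^sup>2 / (Complex u v - cnj z)\<^sup>2) / c))
       \<le> ennreal (Im z / c * (1 / ((u - Re z)^2 + (v + Im z)^2)))"
      by (rule ennreal_leI[OF ptw[OF g assms(3-5)]])
    also have "\<dots> = ennreal (Im z / c) * ennreal (1 / ((u - Re z)^2 + (v + Im z)^2))"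
      by (rule ennreal_mult) (use assms in auto)
    finally show "ennreal (\<Phi> (cmod (complex_of_real (growth_inv \<Phi> (1 / Im z)) * (Im z)\<^sup>2 / (Complex u v - cnj z)\<^sup>2) / c))
       \<le> ennreal (Im z / c) * ennreal (1 / ((u - Re z)^2 + (v + Im z)^2))" .
  qed
  also have "\<dots> = ennreal (Im z / c) * (\<integral>\<^sup>+ u. ennreal (1 / ((u - Re z)^2 + (v + Im z)^2)) \<partial>lborel)"
    by (simp add: nn_integral_cmult)
  also have "\<dots> \<le> ennreal (Im z / c) * ennreal (pi / (v + Im z))"
    using assms by (intro mult_left_mono lorentz) auto
  also have "\<dots> = ennreal (Im z / c * (pi / (v + Im z)))"
    using assms by (intro ennreal_mult[symmetric]) auto
  also have "\<dots> \<le> ennreal (pi / c)"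
  proof (rule ennreal_leI)
    have "Im z / (v + Im z) \<le> 1" using assms by simp
    then have "pi / c * (Im z / (v + Im z)) \<le> pi / c" using assms by (intro mult_left_le) auto
    moreover have "Im z / c * (pi / (v + Im z)) = pi / c * (Im z / (v + Im z))" by simp
    ultimately show "Im z / c * (pi / (v + Im z)) \<le> pi / c" by linarith
  qed
  finally show ?thesis .
qed

theorem lemma3p8:
  fixes \<Phi> :: "real \<Rightarrow> real" and z :: complex
  assumes "growth_function \<Phi>" and "convex_on {0..} \<Phi>" and "Im z > 0"
  shows "(\<lambda>w. complex_of_real (growth_inv \<Phi> (1 / Im z)) * (Im z)\<^sup>2 / (w - cnj z)\<^sup>2)
           \<in> hardy_orlicz \<Phi>
       \<and> (SUP v\<in>{0<..}. \<integral>\<^sup>+ u. ennreal (\<Phi> (cmod (complex_of_real (growth_inv \<Phi> (1 / Im z))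
              * (Im z)\<^sup>2 / (Complex u v - cnj z)\<^sup>2))) \<partial>lborel) \<le> ennreal pi"
proof
  let ?f = "\<lambda>w. complex_of_real (growth_inv \<Phi> (1 / Im z)) * (Im z)\<^sup>2 / (w - cnj z)\<^sup>2"
  have hol: "?f holomorphic_on upper_half_plane"
  proof (intro holomorphic_intros)
    fix w assume "w \<in> upper_half_plane"
    then have "Im (w - cnj z) > 0" using assms(3) by (simp add: upper_half_plane_def)
    then show "(w - cnj z)\<^sup>2 \<noteq> 0" by auto
  qed
  have sl: "slice_lux \<Phi> ?f v \<le> ennreal pi" if "v > 0" for v
  proof -
    have "(\<integral>\<^sup>+ u. ennreal (\<Phi> (cmod (?f (Complex u v)) / pi)) \<partial>lborel) \<le> ennreal (pi / pi)"
      by (rule intbound[OF assms(1,2) that assms(3)]) (use pi_ge_two in linarith)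
    then have i1: "(\<integral>\<^sup>+ u. ennreal (\<Phi> (cmod (?f (Complex u v)) / pi)) \<partial>lborel) \<le> 1"
      by (simp only: divide_self_if pi_neq_zero if_False ennreal_1)
    have "pi > 0 \<and> (\<integral>\<^sup>+ u. ennreal (\<Phi> (cmod (?f (Complex u v)) / pi)) \<partial>lborel) \<le> 1"
      using i1 pi_gt_zero by blast
    then have "ennreal pi \<in> {ennreal c | c. c > 0 \<and>
      (\<integral>\<^sup>+ x. ennreal (\<Phi> (cmod (?f (Complex x v)) / c)) \<partial>lborel) \<le> 1}"
      by blast
    then show ?thesis unfolding slice_lux_def by (rule Inf_lower)
  qed
  have "(SUP y\<in>{0<..}. slice_lux \<Phi> ?f y) \<le> ennreal pi"
    using sl by (intro SUP_least) simp
  also have "\<dots> < \<infinity>" by simp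
  finally show "?f \<in> hardy_orlicz \<Phi>" using hol unfolding hardy_orlicz_def by auto
next
  show "(SUP v\<in>{0<..}. \<integral>\<^sup>+ u. ennreal (\<Phi> (cmod (complex_of_real (growth_inv \<Phi> (1 / Im z))
              * (Im z)\<^sup>2 / (Complex u v - cnj z)\<^sup>2))) \<partial>lborel) \<le> ennreal pi"
  proof (rule SUP_least)
    fix v :: real assume "v \<in> {0<..}"
    then have "v > 0" by simp
    from intbound[OF assms(1,2) this assms(3), of 1]
    show "(\<integral>\<^sup>+ u. ennreal (\<Phi> (cmod (complex_of_real (growth_inv \<Phi> (1 / Im z))
              * (Im z)\<^sup>2 / (Complex u v - cnj z)\<^sup>2))) \<partial>lborel) \<le> ennreal pi"
      by (simp only: div_by_1 order_refl)
  qed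
qed

end
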